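(* Let $(S,d)$ be a finite metric space, let $f\in\operatorname{ext}(B^S_{\mathrm{BL}})$ and let $x\in S\setminus M_f$. Then there exists $y\in S\setminus\{x\}$ such that $|f(x)-f(y)|=|f|_L\,d(x,y)$.
   Context: $\mathrm{BL}(S)$ is the space of real-valued (bounded Lipschitz) functions on $S$, $|f|_L=\sup_{x\neq y}|f(x)-f(y)|/d(x,y)$, $\|f\|_{\mathrm{BL}}=\|f\|_\infty+|f|_L$, $B^S_{\mathrm{BL}}=\{f\in\mathrm{BL}(S):\|f\|_{\mathrm{BL}}\le1\}$, $\operatorname{ext}$ denotes extreme points, and $M_f=\{x\in S:|f(x)|=\|f\|_\infty\}$. *)

theory Defs
  imports "HOL-Analysis.Analysis"
begin

text \<open>A finite metric space (S,d) is modelled as a finite type of class metric_space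
  (S = UNIV, d = dist). Every real function on a finite metric space is bounded Lipschitz,
  so BL(S) is the set of all functions of type 'a \<Rightarrow> real.\<close>

definition sup_norm :: "('a::finite \<Rightarrow> real) \<Rightarrow> real" where
  "sup_norm f = (SUP x. \<bar>f x\<bar>)"

text \<open>Lipschitz constant; the supremum of the empty set (one-point space) is taken to be 0.\<close>
definition lip_const :: "('a::metric_space \<Rightarrow> real) \<Rightarrow> real" where
  "lip_const f = Sup (insert 0 {\<bar>f x - f y\<bar> / dist x y | x y. x \<noteq> y})"

definition BL_norm :: "('a::{metric_space,finite} \<Rightarrow> real) \<Rightarrow> real" where
  "BL_norm f = sup_norm f + lip_const f"

definition BL_ball :: "('a::{metric_space,finite} \<Rightarrow> real) set" where
  "BL_ball = {f. BL_norm f \<le> 1}"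

definition max_set :: "('a::finite \<Rightarrow> real) \<Rightarrow> 'a set" where
  "max_set f = {x. \<bar>f x\<bar> = sup_norm f}"

definition extreme_points :: "('a \<Rightarrow> real) set \<Rightarrow> ('a \<Rightarrow> real) set" where
  "extreme_points K = {f \<in> K. \<forall>g\<in>K. \<forall>h\<in>K. \<forall>t::real. 0 < t \<and> t < 1 \<and>
      f = (\<lambda>x. t * g x + (1 - t) * h x) \<longrightarrow> g = f \<and> h = f}"

end

theory Submission
  imports Defs
begin

lemma sup_norm_upper: "\<bar>f z\<bar> \<le> sup_norm (f::'a::finite \<Rightarrow> real)"
  unfolding sup_norm_def by (rule cSUP_upper) (auto intro: bdd_above_finite)

lemma sup_norm_least: "(\<And>z. \<bar>f z\<bar> \<le> c) \<Longrightarrow> sup_norm (f::'a::finite \<Rightarrow> real) \<le> c"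
  unfolding sup_norm_def by (rule cSUP_least) auto

lemma sup_norm_attained: "\<exists>z. \<bar>f z\<bar> = sup_norm (f::'a::finite \<Rightarrow> real)"
proof -
  have "Sup (range (\<lambda>z. \<bar>f z\<bar>)) \<in> range (\<lambda>z. \<bar>f z\<bar>)"
    by (subst cSup_eq_Max) auto
  then show ?thesis unfolding sup_norm_def by auto
qed

lemma lip_fin: "finite {\<bar>f x - f y\<bar> / dist x y | x y. x \<noteq> (y::'a::{metric_space,finite})}"
proof -
  have "{\<bar>f x - f y\<bar> / dist x y | x y. x \<noteq> (y::'a)} \<subseteq> (\<lambda>(x,y). \<bar>f x - f y\<bar> / dist x y) ` UNIV"
    by auto
  then show ?thesis by (rule finite_subset) auto
qed

lemma lip_upper:
  fixes f :: "'a::{metric_space,finite} \<Rightarrow> real"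
  assumes "a \<noteq> b"
  shows "\<bar>f a - f b\<bar> \<le> lip_const f * dist a b"
proof -
  have "\<bar>f a - f b\<bar> / dist a b \<le> lip_const f"
    unfolding lip_const_def
    by (rule cSup_upper) (use assms lip_fin[of f] in \<open>auto intro: bdd_above_finite\<close>)
  then show ?thesis using assms by (simp add: divide_le_eq mult.commute)
qed

lemma lip_nonneg: "0 \<le> lip_const (f :: 'a::{metric_space,finite} \<Rightarrow> real)"
  unfolding lip_const_def
  by (rule cSup_upper) (use lip_fin[of f] in \<open>auto intro: bdd_above_finite\<close>)

lemma lip_least:
  fixes g :: "'a::{metric_space,finite} \<Rightarrow> real"
  assumes "\<And>a b. a \<noteq> b \<Longrightarrow> \<bar>g a - g b\<bar> \<le> c * dist a b" "0 \<le> c"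
  shows "lip_const g \<le> c"
  unfolding lip_const_def
proof (rule cSup_least)
  fix v assume "v \<in> insert 0 {\<bar>g x - g y\<bar> / dist x y | x y. x \<noteq> y}"
  then show "v \<le> c" using assms by (auto simp: divide_le_eq mult.commute)
qed auto

theorem lemma6p2:
  fixes f :: "'a::{metric_space,finite} \<Rightarrow> real" and x :: 'a
  assumes "f \<in> extreme_points BL_ball"
    and "x \<notin> max_set f"
  shows "\<exists>y. y \<noteq> x \<and> \<bar>f x - f y\<bar> = lip_const f * dist x y"
proof (rule ccontr)
  assume nc: "\<not> ?thesis"
  define L where "L = lip_const f"
  have lt: "\<bar>f x - f y\<bar> < L * dist x y" if "y \<noteq> x" for y
    using nc lip_upper[of x y f] that unfolding L_def by force
  have xs: "\<bar>f x\<bar> < sup_norm f"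
    using assms(2) sup_norm_upper[of f x] unfolding max_set_def by auto
  define E where "E = insert (sup_norm f - \<bar>f x\<bar>) ((\<lambda>y. L * dist x y - \<bar>f x - f y\<bar>) ` {y. y \<noteq> x})"
  define e where "e = Min E"
  have Efin: "finite E" unfolding E_def by auto
  have epos: "e > 0" unfolding e_def using Efin xs lt
    by (subst Min_gr_iff) (auto simp: E_def)
  have e1: "e \<le> sup_norm f - \<bar>f x\<bar>" unfolding e_def using Efin by (auto simp: E_def)
  have e2: "e \<le> L * dist x y - \<bar>f x - f y\<bar>" if "y \<noteq> x" for y
    unfolding e_def using Efin that by (auto simp: E_def intro!: Min_le)
  have Lnn: "0 \<le> L" unfolding L_def by (rule lip_nonneg)
  have fB: "f \<in> BL_ball" using assms(1) unfolding extreme_points_def by auto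
  have inball: "(\<lambda>z. f z + (if z = x then s else 0)) \<in> BL_ball" if s: "\<bar>s\<bar> = e" for s
  proof -
    let ?g = "\<lambda>z. f z + (if z = x then s else 0)"
    have "sup_norm ?g \<le> sup_norm f"
    proof (rule sup_norm_least)
      fix z show "\<bar>?g z\<bar> \<le> sup_norm f"
        using sup_norm_upper[of f z] e1 s by auto
    qed
    moreover have "lip_const ?g \<le> L"
    proof (rule lip_least[OF _ Lnn])
      fix a b :: 'a assume ab: "a \<noteq> b"
      show "\<bar>?g a - ?g b\<bar> \<le> L * dist a b"
      proof (cases "a = x")
        case True
        have b: "b \<noteq> x" using ab True by simp
        have "\<bar>?g a - ?g b\<bar> = \<bar>(f x - f b) + s\<bar>" using True b by simp
        also have "\<dots> \<le> \<bar>f x - f b\<bar> + e" using abs_triangle_ineq[of "f x - f b" s] s by linarith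
        also have "\<dots> \<le> L * dist a b" using e2[OF b] True by simp
        finally show ?thesis .
      next
        case False
        show ?thesis
        proof (cases "b = x")
          case True
          have a: "a \<noteq> x" using False by simp
          have "\<bar>?g a - ?g b\<bar> = \<bar>(f x - f a) + s\<bar>" 
          proof -
            have "?g a - ?g b = - ((f x - f a) + s)" using a unfolding True by simp
            then show ?thesis by (simp only: abs_minus_cancel)
          qed
          also have "\<dots> \<le> \<bar>f x - f a\<bar> + e" using abs_triangle_ineq[of "f x - f a" s] s by linarith
          also have "\<dots> \<le> L * dist a b" using e2[OF a] True by (simp add: dist_commute)
          finally show ?thesis .
        next
          case False2: False
          then show ?thesis using False lip_upper[OF ab, of f] unfolding L_def by auto
        qed
      qed
    qed
    ultimately show ?thesis using fB unfolding BL_ball_def BL_norm_def L_def by auto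
  qed
  let ?g = "\<lambda>z. f z + (if z = x then e else 0)"
  let ?h = "\<lambda>z. f z + (if z = x then - e else 0)"
  have gB: "?g \<in> BL_ball" using inball[of e] epos by auto
  have hB: "?h \<in> BL_ball" using inball[of "-e"] epos by auto
  have feq: "f = (\<lambda>z. (1/2) * ?g z + (1 - 1/2) * ?h z)"
  proof
    fix z show "f z = (1/2) * ?g z + (1 - 1/2) * ?h z" by (cases "z = x") (simp_all add: add_divide_distrib[symmetric])
  qed
  have H: "\<forall>g\<in>BL_ball. \<forall>h\<in>BL_ball. \<forall>t::real. 0 < t \<and> t < 1 \<and>
      f = (\<lambda>x. t * g x + (1 - t) * h x) \<longrightarrow> g = f \<and> h = f"
    using assms(1) unfolding extreme_points_def mem_Collect_eq by (rule conjunct2)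
  have "?g = f \<and> ?h = f"
    by (rule H[rule_format, OF gB hB, of "1/2"]) (intro conjI feq; simp)
  then have "?g = f" by (rule conjunct1)
  then have "?g x = f x" by (rule fun_cong)
  then show False using epos by simp
qed

end
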